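(* Let $V$ be a real vector space of dimension $m\ge3$ with a non-degenerate symmetric inner product of arbitrary signature, and let $R$ be an algebraic curvature tensor on $V$. Then: (1) if $R$ is $k$-stein, then $\operatorname{trace}\{\mathcal{J}_R(x)^k\}=0$ for all $x\in\mathcal{N}$; (2) if $R$ is $m$-stein, then $\mathcal{J}_R(x)$ is nilpotent for all $x\in\mathcal{N}$; (3) if $\operatorname{trace}\{\mathcal{J}_R(x)\}=0$ for all $x\in\mathcal{N}$, then $R$ is Einstein.
   Context: An algebraic curvature tensor is $R\in\otimes^4V^*$ with $R(x,y,z,w)=R(z,w,x,y)=-R(y,x,z,w)$ and $R(x,y,z,w)+R(y,z,x,w)+R(z,x,y,w)=0$. The Jacobi operator is defined by $(\mathcal{J}_R(x)y,w)=R(y,x,x,w)$. The Ricci tensor is $\rho_R(x,y)=\operatorname{trace}\{z\mapsto R(z,x)y\}$, so that $\rho_R(x,x)=\operatorname{trace}\,\mathcal{J}_R(x)$. $R$ is Einstein if there is a constant $c_1$ with $\rho_R(x,y)=c_1(x,y)$ for all $x,y\in V$. $R$ is $k$-stein if there are constants $c_i$ with $\operatorname{trace}\{\mathcal{J}_R(x)^i\}=c_i(x,x)^i$ for all $x\in V$ and $1\le i\le k$. Everything is extended complex-multilinearly to $V_{\mathbb{C}}=V\otimes\mathbb{C}$; $\mathcal{N}=\{v\in V_{\mathbb{C}}:(v,v)=0\}$. A linear map $A$ is nilpotent if $A^m=0$, equivalently $\operatorname{trace}(A^i)=0$ for $1\le i\le m$. *)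

theory Defs
  imports "HOL-Analysis.Analysis"
begin

text \<open>The model space V is real^'n (dimension m = CARD('n)); the inner product is given by
  a real symmetric invertible Gram matrix g; an element R of the 4-fold tensor product of V^*
  is given by its components R i j k l = R(e_i,e_j,e_k,e_l). Everything is extended
  complex-multilinearly to V_C = complex^'n.\<close>

type_synonym ('n) tensor4 = "'n \<Rightarrow> 'n \<Rightarrow> 'n \<Rightarrow> 'n \<Rightarrow> real"

definition cvec :: "real^'n \<Rightarrow> complex^'n" where
  "cvec x = (\<chi> i. complex_of_real (x $ i))"

definition ipC :: "real^'n^'n \<Rightarrow> complex^'n \<Rightarrow> complex^'n \<Rightarrow> complex" where
  "ipC g x y = (\<Sum>i\<in>UNIV. \<Sum>j\<in>UNIV. complex_of_real (g $ i $ j) * x $ i * y $ j)"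

definition ipR :: "real^'n^'n \<Rightarrow> real^'n \<Rightarrow> real^'n \<Rightarrow> real" where
  "ipR g x y = (\<Sum>i\<in>UNIV. \<Sum>j\<in>UNIV. g $ i $ j * x $ i * y $ j)"

definition nondeg_inner :: "real^'n^'n \<Rightarrow> bool" where
  "nondeg_inner g \<longleftrightarrow> transpose g = g \<and> invertible g"

definition evalR :: "('n::finite) tensor4 \<Rightarrow> real^'n \<Rightarrow> real^'n \<Rightarrow> real^'n \<Rightarrow> real^'n \<Rightarrow> real" where
  "evalR R x y z w = (\<Sum>i\<in>UNIV. \<Sum>j\<in>UNIV. \<Sum>k\<in>UNIV. \<Sum>l\<in>UNIV.
      R i j k l * x $ i * y $ j * z $ k * w $ l)"

definition evalRC :: "('n::finite) tensor4 \<Rightarrow> complex^'n \<Rightarrow> complex^'n \<Rightarrow> complex^'n \<Rightarrow> complex^'n \<Rightarrow> complex" where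
  "evalRC R x y z w = (\<Sum>i\<in>UNIV. \<Sum>j\<in>UNIV. \<Sum>k\<in>UNIV. \<Sum>l\<in>UNIV.
      complex_of_real (R i j k l) * x $ i * y $ j * z $ k * w $ l)"

definition alg_curv_tensor :: "('n::finite) tensor4 \<Rightarrow> bool" where
  "alg_curv_tensor R \<longleftrightarrow>
    (\<forall>x y z w. evalR R x y z w = evalR R z w x y
             \<and> evalR R x y z w = - evalR R y x z w
             \<and> evalR R x y z w + evalR R y z x w + evalR R z x y w = 0)"

text \<open>Jacobi operator J_R(x) on V_C as a matrix, characterised by
  (J_R(x) y, w) = R(y,x,x,w); the inverse Gram matrix raises the index.\<close>
definition jacobi :: "real^'n^'n \<Rightarrow> ('n::finite) tensor4 \<Rightarrow> complex^'n \<Rightarrow> complex^'n^'n" where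
  "jacobi g R x = (\<chi> a b. \<Sum>c\<in>UNIV.
      complex_of_real (matrix_inv g $ a $ c) * evalRC R (axis b 1) x x (axis c 1))"

text \<open>Ricci tensor rho(x,y) = trace (z \<mapsto> R(z,x)y), where (R(z,x)y, w) = R(z,x,y,w).\<close>
definition ricci :: "real^'n^'n \<Rightarrow> ('n::finite) tensor4 \<Rightarrow> real^'n \<Rightarrow> real^'n \<Rightarrow> real" where
  "ricci g R x y = (\<Sum>a\<in>UNIV. \<Sum>c\<in>UNIV.
      matrix_inv g $ a $ c * evalR R (axis a 1) x y (axis c 1))"

definition einstein :: "real^'n^'n \<Rightarrow> ('n::finite) tensor4 \<Rightarrow> bool" where
  "einstein g R \<longleftrightarrow> (\<exists>c1::real. \<forall>x y. ricci g R x y = c1 * ipR g x y)"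

primrec matpow :: "'a::semiring_1^'n^'n \<Rightarrow> nat \<Rightarrow> 'a^'n^'n" where
  "matpow A 0 = mat 1"
| "matpow A (Suc p) = A ** matpow A p"

definition k_stein :: "real^'n^'n \<Rightarrow> ('n::finite) tensor4 \<Rightarrow> nat \<Rightarrow> bool" where
  "k_stein g R k \<longleftrightarrow> (\<exists>c::nat \<Rightarrow> real. \<forall>x::real^'n. \<forall>i\<in>{1..k}.
      trace (matpow (jacobi g R (cvec x)) i) = complex_of_real (c i * (ipR g x x) ^ i))"

definition null_cone :: "real^'n^'n \<Rightarrow> (complex^'n) set" where
  "null_cone g = {v. ipC g v v = 0}"

definition nilpotent_mat :: "'a::semiring_1^'n^'n \<Rightarrow> bool" where
  "nilpotent_mat A \<longleftrightarrow> (\<exists>p. matpow A p = 0)"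

end

theory Submission
  imports Defs "Jordan_Normal_Form.Jordan_Normal_Form_Existence"
begin

no_notation Matrix.vec_index (infixl "$" 100)


definition lp :: "(complex^'n \<Rightarrow> complex) \<Rightarrow> bool" where
  "lp F \<longleftrightarrow> (\<forall>u w. \<exists>p. \<forall>t. F (\<chi> i. u$i + t * w$i) = poly p t)"

lemma lp_const: "lp (\<lambda>v. c)"
  unfolding lp_def by (metis poly_const_conv)

lemma lp_coord: "lp (\<lambda>v. v $ i)"
  unfolding lp_def
proof (intro allI)
  fix u w :: "complex^'a"
  show "\<exists>p. \<forall>t. (\<chi> i. u$i + t * w$i) $ i = poly p t"
    by (rule exI[of _ "[:u$i, w$i:]"]) (simp add: mult.commute)
qed

lemma lp_add: "lp F \<Longrightarrow> lp G \<Longrightarrow> lp (\<lambda>v. F v + G v)"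
  unfolding lp_def by (metis poly_add)

lemma lp_diff: "lp F \<Longrightarrow> lp G \<Longrightarrow> lp (\<lambda>v. F v - G v)"
  unfolding lp_def by (metis poly_diff)

lemma lp_mult: "lp F \<Longrightarrow> lp G \<Longrightarrow> lp (\<lambda>v. F v * G v)"
  unfolding lp_def by (metis poly_mult)

lemma lp_pow: "lp F \<Longrightarrow> lp (\<lambda>v. F v ^ k)"
  by (induction k) (auto intro: lp_mult lp_const)

lemma lp_sum: "finite S \<Longrightarrow> (\<And>i. i \<in> S \<Longrightarrow> lp (f i)) \<Longrightarrow> lp (\<lambda>v. \<Sum>i\<in>S. f i v)"
  by (induction S rule: finite_induct) (auto intro: lp_add lp_const)

lemma lp_sumU: "(\<And>i. lp (f i)) \<Longrightarrow> lp (\<lambda>v. \<Sum>i\<in>(UNIV::'a::finite set). f i v)"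
  by (rule lp_sum) auto

lemma lp_vanish:
  assumes F: "lp F" and z: "\<And>x. F (cvec x) = 0"
  shows "F v = 0"
proof -
  define a :: "real^'a" where "a = (\<chi> i. Re (v$i))"
  define b :: "real^'a" where "b = (\<chi> i. Im (v$i))"
  obtain p where p: "\<And>t. F (\<chi> i. (cvec a)$i + t * (cvec b)$i) = poly p t"
    using F unfolding lp_def by blast
  have r: "poly p (complex_of_real t) = 0" for t
  proof -
    have "(\<chi> i. (cvec a)$i + complex_of_real t * (cvec b)$i) = cvec (\<chi> i. a$i + t * b$i)"
      by (simp add: cvec_def Finite_Cartesian_Product.vec_eq_iff)
    then show ?thesis using p[of "complex_of_real t"] z by metis
  qed
  have "p = 0"
  proof (rule ccontr)
    assume "p \<noteq> 0"
    then have "finite {x. poly p x = 0}" by (rule poly_roots_finite)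
    moreover have "range complex_of_real \<subseteq> {x. poly p x = 0}" using r by auto
    moreover have "infinite (range complex_of_real)"
      using inj_of_real infinite_UNIV_char_0 finite_imageD by blast
    ultimately show False using finite_subset by blast
  qed
  have "(\<chi> i. (cvec a)$i + \<i> * (cvec b)$i) = v"
    by (simp add: cvec_def Finite_Cartesian_Product.vec_eq_iff a_def b_def complex_eq_iff)
  then show ?thesis using p[of "\<i>"] \<open>p = 0\<close> by simp
qed

lemma lp_evalRC: "lp (\<lambda>v. evalRC R x v v y)"
  unfolding evalRC_def
  by (intro lp_sumU lp_mult lp_const lp_coord)

lemma lp_jacobi: "lp (\<lambda>v. jacobi g R v $ a $ b)"
  unfolding jacobi_def
  by (simp, intro lp_sumU lp_mult lp_const lp_evalRC)

lemma lp_matpow: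
  assumes "\<And>a b. lp (\<lambda>v. M v $ a $ b)"
  shows "lp (\<lambda>v. matpow (M v) k $ a $ b)"
proof (induction k arbitrary: a b)
  case 0
  show ?case by (simp add: Finite_Cartesian_Product.mat_def lp_const)
next
  case (Suc k)
  show ?case by (simp add: matrix_matrix_mult_def, intro lp_sumU lp_mult assms Suc)
qed

lemma lp_trace_jac: "lp (\<lambda>v. trace (matpow (jacobi g R v) k))"
  unfolding trace_def by (intro lp_sumU lp_matpow lp_jacobi)

lemma lp_ipC: "lp (\<lambda>v. ipC g v v)"
  unfolding ipC_def by (intro lp_sumU lp_mult lp_const lp_coord)

lemma ipC_cvec: "ipC g (cvec x) (cvec x) = complex_of_real (ipR g x x)"
  by (simp add: ipC_def ipR_def cvec_def)

lemma part1:
  assumes k: "k \<ge> 1" and ks: "k_stein g R k" and v: "v \<in> null_cone g"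
  shows "trace (matpow (jacobi g R v) k) = 0"
proof -
  obtain c where c: "\<And>x i. i \<in> {1..k} \<Longrightarrow>
      trace (matpow (jacobi g R (cvec x)) i) = complex_of_real (c i * (ipR g x x) ^ i)"
    using ks unfolding k_stein_def by blast
  let ?F = "\<lambda>v. trace (matpow (jacobi g R v) k) - complex_of_real (c k) * (ipC g v v) ^ k"
  have "lp ?F" by (intro lp_diff lp_mult lp_const lp_pow lp_trace_jac lp_ipC)
  moreover have "?F (cvec x) = 0" for x
    using c[of k x] k by (simp add: ipC_cvec)
  ultimately have "?F v = 0" by (rule lp_vanish)
  moreover have "ipC g v v = 0" using v by (simp add: null_cone_def)
  ultimately show ?thesis using k by simp
qed


lemma powersum_zero:
  fixes d :: "nat \<Rightarrow> complex"
  assumes tr: "\<And>k. k \<in> {1..N} \<Longrightarrow> (\<Sum>i<N. d i ^ k) = 0"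
  shows "\<forall>i<N. d i = 0"
proof (rule ccontr)
  assume "\<not> (\<forall>i<N. d i = 0)"
  then obtain i0 where i0: "i0 < N" "d i0 \<noteq> 0" by auto
  define m where "m = d i0"
  define V where "V = d ` {..<N}"
  define S where "S = V - {0, m}"
  define p :: "complex poly" where "p = [:0,1:] * (\<Prod>\<mu>\<in>S. [:-\<mu>,1:])"
  have finV: "finite V" unfolding V_def by auto
  have finS: "finite S" unfolding S_def using finV by auto
  have "card S < card V"
    using finV i0 unfolding S_def V_def m_def by (intro psubset_card_mono) auto
  moreover have "card V \<le> N" unfolding V_def using card_image_le[of "{..<N}" d] by simp
  ultimately have cS: "card S + 1 \<le> N" by simp
  have "degree (\<Prod>\<mu>\<in>S. [:-\<mu>,1:]) \<le> (\<Sum>\<mu>\<in>S. degree [:-\<mu>,1:])"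
    using degree_prod_sum_le[OF finS, of "\<lambda>\<mu>. [:-\<mu>,1:]"] by (simp add: o_def)
  also have "\<dots> = card S" by simp
  finally have "degree p \<le> 1 + card S"
    unfolding p_def using degree_mult_le[of "[:0,1:]" "\<Prod>\<mu>\<in>S. [:-\<mu>,1:]"] by simp
  with cS have degp: "degree p \<le> N" by simp
  have c0: "coeff p 0 = 0" unfolding p_def by (simp add: coeff_mult_0)
  have ex: "poly p x = (\<Sum>k\<le>N. coeff p k * x ^ k)" for x
  proof -
    have "poly p x = (\<Sum>k\<le>degree p. coeff p k * x ^ k)" by (rule poly_altdef)
    also have "\<dots> = (\<Sum>k\<le>N. coeff p k * x ^ k)"
      by (rule sum.mono_neutral_left) (use degp in \<open>auto simp: coeff_eq_0\<close>)
    finally show ?thesis .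
  qed
  have "(\<Sum>i<N. poly p (d i)) = (\<Sum>i<N. \<Sum>k\<le>N. coeff p k * d i ^ k)" by (simp add: ex)
  also have "\<dots> = (\<Sum>k\<le>N. coeff p k * (\<Sum>i<N. d i ^ k))"
    by (subst sum.swap) (simp add: sum_distrib_left)
  also have "\<dots> = 0"
  proof (rule sum.neutral, intro ballI)
    fix k assume "k \<in> {..N}"
    then show "coeff p k * (\<Sum>i<N. d i ^ k) = 0"
      using tr[of k] c0 by (cases "k = 0") auto
  qed
  finally have s0: "(\<Sum>i<N. poly p (d i)) = 0" .
  have pz: "poly p (d i) = (if d i = m then poly p m else 0)" if "i < N" for i
  proof (cases "d i = m")
    case False
    show ?thesis
    proof (cases "d i = 0")
      case True then show ?thesis using False by (simp add: p_def)
    next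
      case False2: False
      have "d i \<in> S" using that False False2 unfolding S_def V_def by auto
      then have "(\<Prod>\<mu>\<in>S. poly [:-\<mu>,1:] (d i)) = 0"
        using finS by (intro prod_zero) (auto intro!: bexI[of _ "d i"])
      then show ?thesis using False by (simp add: p_def poly_prod)
    qed
  qed simp
  have "(\<Sum>i<N. poly p (d i)) = (\<Sum>i<N. (if d i = m then poly p m else 0))"
    by (rule sum.cong) (auto simp: pz)
  also have "\<dots> = of_nat (card ({..<N} \<inter> {i. d i = m})) * poly p m"
    by (simp add: sum.If_cases)
  finally have "of_nat (card ({..<N} \<inter> {i. d i = m})) * poly p m = 0" using s0 by simp
  moreover have "card ({..<N} \<inter> {i. d i = m}) \<noteq> 0"
    using i0 by (auto simp: card_eq_0_iff m_def)
  moreover have "poly p m \<noteq> 0"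
  proof -
    have "m \<notin> S" unfolding S_def by auto
    then have "(\<Prod>\<mu>\<in>S. poly [:-\<mu>,1:] m) \<noteq> 0"
      using finS by (subst prod_zero_iff) auto
    then show ?thesis using i0 by (simp add: p_def poly_prod m_def)
  qed
  ultimately show False by simp
qed

lemma mat_mult_entry:
  assumes "A \<in> carrier_mat n m" "B \<in> carrier_mat m k" "i < n" "j < k"
  shows "(A * B) $$ (i,j) = (\<Sum>l<m. A $$ (i,l) * B $$ (l,j))"
  using assms by (simp add: index_mult_mat scalar_prod_def lessThan_atLeast0)

lemma mat_trace_comm:
  fixes A :: "'a::comm_semiring_1 mat"
  assumes A: "A \<in> carrier_mat n m" and B: "B \<in> carrier_mat m n"
  shows "(\<Sum>i<n. (A * B) $$ (i,i)) = (\<Sum>j<m. (B * A) $$ (j,j))"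
proof -
  have "(\<Sum>i<n. (A * B) $$ (i,i)) = (\<Sum>i<n. \<Sum>l<m. A $$ (i,l) * B $$ (l,i))"
    using A B by (intro sum.cong refl mat_mult_entry) auto
  also have "\<dots> = (\<Sum>l<m. \<Sum>i<n. B $$ (l,i) * A $$ (i,l))"
    by (subst sum.swap) (intro sum.cong refl, simp add: mult.commute)
  also have "\<dots> = (\<Sum>j<m. (B * A) $$ (j,j))"
    using A B by (intro sum.cong refl, subst mat_mult_entry) auto
  finally show ?thesis .
qed

lemma ut_pow:
  fixes B :: "'a::comm_semiring_1 mat"
  assumes B: "B \<in> carrier_mat N N" and ut: "upper_triangular B"
  shows "(\<forall>i j. j < i \<longrightarrow> i < N \<longrightarrow> (B ^\<^sub>m k) $$ (i,j) = 0) \<and>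
         (\<forall>i<N. (B ^\<^sub>m k) $$ (i,i) = B $$ (i,i) ^ k)"
proof (induction k)
  case 0
  show ?case using B by auto
next
  case (Suc k)
  have X: "B ^\<^sub>m k \<in> carrier_mat N N" using B by auto
  have bz: "B $$ (l,j) = 0" if "j < l" "l < N" for l j
    using ut that B by auto
  show ?case
  proof (intro conjI allI impI)
    fix i j assume ji: "j < i" and iN: "i < N"
    have "(B ^\<^sub>m Suc k) $$ (i,j) = (\<Sum>l<N. (B ^\<^sub>m k) $$ (i,l) * B $$ (l,j))"
      using mat_mult_entry[OF X B, of i j] ji iN by simp
    also have "\<dots> = 0"
    proof (rule sum.neutral, intro ballI)
      fix l assume l: "l \<in> {..<N}"
      show "(B ^\<^sub>m k) $$ (i,l) * B $$ (l,j) = 0"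
      proof (cases "l < i")
        case True then show ?thesis using Suc iN by simp
      next
        case False then show ?thesis using bz[of j l] ji l by simp
      qed
    qed
    finally show "(B ^\<^sub>m Suc k) $$ (i,j) = 0" .
  next
    fix i assume iN: "i < N"
    have "(B ^\<^sub>m Suc k) $$ (i,i) = (\<Sum>l<N. (B ^\<^sub>m k) $$ (i,l) * B $$ (l,i))"
      using mat_mult_entry[OF X B, of i i] iN by simp
    also have "\<dots> = (B ^\<^sub>m k) $$ (i,i) * B $$ (i,i)"
    proof -
      have "(\<Sum>l<N. (B ^\<^sub>m k) $$ (i,l) * B $$ (l,i)) =
          (B ^\<^sub>m k) $$ (i,i) * B $$ (i,i) + (\<Sum>l\<in>{..<N}-{i}. (B ^\<^sub>m k) $$ (i,l) * B $$ (l,i))"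
        using iN by (subst sum.remove[of _ i]) auto
      also have "(\<Sum>l\<in>{..<N}-{i}. (B ^\<^sub>m k) $$ (i,l) * B $$ (l,i)) = 0"
      proof (rule sum.neutral, intro ballI)
        fix l assume l: "l \<in> {..<N}-{i}"
        show "(B ^\<^sub>m k) $$ (i,l) * B $$ (l,i) = 0"
        proof (cases "l < i")
          case True then show ?thesis using Suc iN by simp
        next
          case False then show ?thesis using bz[of i l] l by simp
        qed
      qed
      finally show ?thesis by simp
    qed
    finally show "(B ^\<^sub>m Suc k) $$ (i,i) = B $$ (i,i) ^ Suc k"
      using Suc iN by (simp add: mult.commute)
  qed
qed

lemma sut_pow:
  assumes B: "B \<in> carrier_mat N N" and sut: "\<And>i j. j \<le> i \<Longrightarrow> i < N \<Longrightarrow> B $$ (i,j) = 0"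
  shows "\<forall>i j. i < N \<longrightarrow> j < N \<longrightarrow> j < i + k \<longrightarrow> (B ^\<^sub>m k) $$ (i,j) = 0"
proof (induction k)
  case 0
  show ?case using B by auto
next
  case (Suc k)
  have X: "B ^\<^sub>m k \<in> carrier_mat N N" using B by auto
  show ?case
  proof (intro allI impI)
    fix i j assume iN: "i < N" and jN: "j < N" and ji: "j < i + Suc k"
    have "(B ^\<^sub>m Suc k) $$ (i,j) = (\<Sum>l<N. (B ^\<^sub>m k) $$ (i,l) * B $$ (l,j))"
      using mat_mult_entry[OF X B, of i j] iN jN by simp
    also have "\<dots> = 0"
    proof (rule sum.neutral, intro ballI)
      fix l assume l: "l \<in> {..<N}"
      show "(B ^\<^sub>m k) $$ (i,l) * B $$ (l,j) = 0"
      proof (cases "l < i + k")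
        case True then show ?thesis using Suc iN l by simp
      next
        case False then show ?thesis using sut[of j l] ji l by simp
      qed
    qed
    finally show "(B ^\<^sub>m Suc k) $$ (i,j) = 0" .
  qed
qed

lemma jnf_nilp:
  fixes M :: "complex mat"
  assumes M: "M \<in> carrier_mat N N"
    and tr: "\<And>k. k \<in> {1..N} \<Longrightarrow> (\<Sum>i<N. (M ^\<^sub>m k) $$ (i,i)) = 0"
  shows "M ^\<^sub>m N = 0\<^sub>m N N"
proof -
  obtain es where cp: "char_poly M = (\<Prod>a\<leftarrow>es. [:- a, 1:])"
    using char_poly_factorized[OF M] by auto
  obtain B P Q where sch: "schur_decomposition M es = (B,P,Q)"
    by (cases "schur_decomposition M es") auto
  from schur_decomposition[OF M cp sch]
  have sw: "similar_mat_wit M B P Q" and ut: "upper_triangular B" by auto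
  from sw M have B: "B \<in> carrier_mat N N" and P: "P \<in> carrier_mat N N"
    and Q: "Q \<in> carrier_mat N N" and QP: "Q * P = 1\<^sub>m N"
    unfolding similar_mat_wit_def Let_def by auto
  have pw: "M ^\<^sub>m k = P * B ^\<^sub>m k * Q" for k by (rule similar_mat_wit_pow_id[OF sw])
  have trB: "(\<Sum>i<N. (M ^\<^sub>m k) $$ (i,i)) = (\<Sum>i<N. (B ^\<^sub>m k) $$ (i,i))" for k
  proof -
    have X: "B ^\<^sub>m k \<in> carrier_mat N N" using B by auto
    have "(\<Sum>i<N. (P * B ^\<^sub>m k * Q) $$ (i,i)) = (\<Sum>i<N. (Q * (P * B ^\<^sub>m k)) $$ (i,i))"
      using P Q X by (intro mat_trace_comm) auto
    also have "Q * (P * B ^\<^sub>m k) = (Q * P) * B ^\<^sub>m k"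
      using P Q X by (simp add: assoc_mult_mat)
    also have "\<dots> = B ^\<^sub>m k" using QP left_mult_one_mat[OF X] by simp
    finally show ?thesis using pw by simp
  qed
  have "\<forall>i<N. B $$ (i,i) = 0"
  proof (rule powersum_zero)
    fix k assume k: "k \<in> {1..N}"
    have "(\<Sum>i<N. B $$ (i,i) ^ k) = (\<Sum>i<N. (B ^\<^sub>m k) $$ (i,i))"
      using ut_pow[OF B ut, of k] by simp
    then show "(\<Sum>i<N. B $$ (i,i) ^ k) = 0" using tr[OF k] trB by simp
  qed
  then have sut: "B $$ (i,j) = 0" if "j \<le> i" "i < N" for i j
    using that ut B by (cases "j = i") auto
  have "B ^\<^sub>m N = 0\<^sub>m N N"
    using sut_pow[OF B sut, of N] B by (intro eq_matI) auto
  then show ?thesis using pw[of N] P Q by simp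
qed


lemma matpow_Suc2: "matpow A (Suc k) = matpow A k ** A"
proof (induction k)
  case 0 show ?case by (simp add: matrix_mul_rid matrix_mul_lid)
next
  case (Suc k)
  have "matpow A (Suc (Suc k)) = A ** matpow A (Suc k)" by simp
  also have "\<dots> = A ** (matpow A k ** A)" using Suc by simp
  also have "\<dots> = matpow A (Suc k) ** A" by (simp add: matrix_mul_assoc)
  finally show ?case .
qed

lemma vec_nilp:
  fixes A :: "complex^'n^'n"
  assumes tr: "\<And>k. k \<in> {1..CARD('n)} \<Longrightarrow> trace (matpow A k) = 0"
  shows "nilpotent_mat A"
proof -
  define N where "N = CARD('n)"
  obtain h :: "nat \<Rightarrow> 'n" where h: "bij_betw h {0..<N} UNIV"
    using ex_bij_betw_nat_finite[of "UNIV::'n set"] unfolding N_def by auto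
  have h': "bij_betw h {..<N} UNIV" using h by (simp add: lessThan_atLeast0)
  define toM :: "complex^'n^'n \<Rightarrow> complex mat" where
    "toM X = Matrix.mat N N (\<lambda>(i,j). X $ h i $ h j)" for X
  have car: "toM X \<in> carrier_mat N N" for X unfolding toM_def by auto
  have sumh: "(\<Sum>c\<in>UNIV. f c) = (\<Sum>l<N. f (h l))" for f :: "'n \<Rightarrow> complex"
    using sum.reindex_bij_betw[OF h', of f] by simp
  have mult: "toM (X ** Y) = toM X * toM Y" for X Y
  proof (rule eq_matI)
    fix i j assume i: "i < dim_row (toM X * toM Y)" and j: "j < dim_col (toM X * toM Y)"
    then have iN: "i < N" and jN: "j < N" by (auto simp: toM_def)
    have "toM (X ** Y) $$ (i,j) = (\<Sum>c\<in>UNIV. X $ h i $ c * Y $ c $ h j)"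
      using iN jN by (simp add: toM_def matrix_matrix_mult_def)
    also have "\<dots> = (\<Sum>l<N. toM X $$ (i,l) * toM Y $$ (l,j))"
      using iN jN by (simp add: sumh toM_def)
    also have "\<dots> = (toM X * toM Y) $$ (i,j)"
      using mat_mult_entry[OF car car iN jN] by simp
    finally show "toM (X ** Y) $$ (i,j) = (toM X * toM Y) $$ (i,j)" .
  qed (auto simp: toM_def)
  have one: "toM (Finite_Cartesian_Product.mat 1) = 1\<^sub>m N"
  proof (rule eq_matI)
    fix i j assume "i < dim_row (1\<^sub>m N)" "j < dim_col (1\<^sub>m N)"
    then have iN: "i < N" and jN: "j < N" by auto
    have "h i = h j \<longleftrightarrow> i = j"
      using h' iN jN unfolding bij_betw_def inj_on_def by auto
    then show "toM (Finite_Cartesian_Product.mat 1) $$ (i,j) = 1\<^sub>m N $$ (i,j)"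
      using iN jN by (simp add: toM_def Finite_Cartesian_Product.mat_def)
  qed (auto simp: toM_def)
  have pw: "toM (matpow A k) = toM A ^\<^sub>m k" for k
  proof (induction k)
    case 0
    have "dim_row (toM A) = N" by (simp add: toM_def)
    then show ?case using one by simp
  next
    case (Suc k)
    show ?case by (simp only: matpow_Suc2 mult Suc pow_mat.simps)
  qed
  have trM: "trace X = (\<Sum>i<N. toM X $$ (i,i))" for X
    unfolding trace_def by (simp add: sumh toM_def)
  have "toM A ^\<^sub>m N = 0\<^sub>m N N"
  proof (rule jnf_nilp[OF car])
    fix k assume k: "k \<in> {1..N}"
    show "(\<Sum>i<N. (toM A ^\<^sub>m k) $$ (i,i)) = 0"
      using tr[of k] k unfolding N_def[symmetric] trM pw by simp
  qed
  then have z: "toM (matpow A N) = 0\<^sub>m N N" using pw by simp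
  have "matpow A N = 0"
  proof (rule Finite_Cartesian_Product.vec_eq_iff[THEN iffD2], intro allI,
         rule Finite_Cartesian_Product.vec_eq_iff[THEN iffD2], intro allI)
    fix a b
    obtain i where i: "i < N" "h i = a" using h' unfolding bij_betw_def by (metis UNIV_I imageE lessThan_iff)
    obtain j where j: "j < N" "h j = b" using h' unfolding bij_betw_def by (metis UNIV_I imageE lessThan_iff)
    have "toM (matpow A N) $$ (i,j) = 0" using z i j by simp
    then show "matpow A N $ a $ b = 0 $ a $ b" using i j by (simp add: toM_def)
  qed
  then show ?thesis unfolding nilpotent_mat_def by blast
qed


definition sbil :: "(complex^'n \<Rightarrow> complex^'n \<Rightarrow> complex) \<Rightarrow> bool" where
  "sbil F \<longleftrightarrow> (\<forall>u v w. F (u + v) w = F u w + F v w) \<and> (\<forall>c u w. F (c *s u) w = c * F u w)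
     \<and> (\<forall>u v. F u v = F v u)"

lemma sbil_addL: "sbil F \<Longrightarrow> F (u + v) w = F u w + F v w" unfolding sbil_def by blast
lemma sbil_scL: "sbil F \<Longrightarrow> F (c *s u) w = c * F u w" unfolding sbil_def by blast
lemma sbil_sym: "sbil F \<Longrightarrow> F u v = F v u" unfolding sbil_def by blast
lemma sbil_addR: "sbil F \<Longrightarrow> F w (u + v) = F w u + F w v"
  using sbil_addL sbil_sym by metis
lemma sbil_scR: "sbil F \<Longrightarrow> F w (c *s u) = c * F w u"
  using sbil_scL sbil_sym by metis

lemma sbil_quad: "sbil F \<Longrightarrow>
   F (u + t *s w) (u + t *s w) = F u u + 2 * t * F u w + t^2 * F w w"
  by (simp add: sbil_addL sbil_addR sbil_scL sbil_scR sbil_sym[of F w u] power2_eq_square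
      algebra_simps)

lemma sbil_polar: assumes "sbil F" "\<And>v. F v v = 0" shows "F u w = 0"
proof -
  have "F (u + 1 *s w) (u + 1 *s w) = F u u + 2 * 1 * F u w + 1^2 * F w w"
    by (rule sbil_quad[OF assms(1)])
  then show ?thesis using assms(2) by simp
qed

lemma sbil_diff: assumes F: "sbil F" and G: "sbil G" shows "sbil (\<lambda>u v. F u v - c * G u v)"
  unfolding sbil_def
proof (intro conjI allI)
  fix u v w show "F (u + v) w - c * G (u + v) w = F u w - c * G u w + (F v w - c * G v w)"
    by (simp add: sbil_addL[OF F] sbil_addL[OF G] algebra_simps)
next
  fix d u w show "F (d *s u) w - c * G (d *s u) w = d * (F u w - c * G u w)"
    by (simp add: sbil_scL[OF F] sbil_scL[OF G] algebra_simps)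
next
  fix u v show "F u v - c * G u v = F v u - c * G v u"
    using sbil_sym[OF F, of u v] sbil_sym[OF G, of u v] by simp
qed

lemma axis_nz: "axis i (1::complex) \<noteq> 0"
  by (simp add: axis_def Finite_Cartesian_Product.vec_eq_iff)

lemma quad_main:
  fixes Qf Bf :: "complex^'n \<Rightarrow> complex^'n \<Rightarrow> complex"
  assumes sQ: "sbil Qf" and sB: "sbil Bf"
    and nd: "\<And>u. (\<And>v. Qf u v = 0) \<Longrightarrow> u = 0"
    and card: "CARD('n) \<ge> 2"
    and van: "\<And>v. Qf v v = 0 \<Longrightarrow> Bf v v = 0"
  shows "\<exists>c. \<forall>u v. Bf u v = c * Qf u v"
proof -
  obtain x0 where x0: "Qf x0 x0 \<noteq> 0"
  proof (rule ccontr)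
    assume "\<not> thesis"
    then have "Qf v v = 0" for v using that by blast
    then have qz: "Qf u v = 0" for u v by (rule sbil_polar[OF sQ])
    have "(axis undefined (1::complex) :: complex^'n) = 0" by (rule nd, rule qz)
    then show False using axis_nz by blast
  qed
  define q0 where "q0 = Qf x0 x0"
  define c where "c = Bf x0 x0 / q0"
  define D where "D = (\<lambda>u v. Bf u v - c * Qf u v)"
  have sD: "sbil D" unfolding D_def by (rule sbil_diff[OF sB sQ])
  have Dx0: "D x0 x0 = 0" using x0 unfolding D_def c_def q0_def by simp
  have vanD: "D v v = 0" if "Qf v v = 0" for v using van[OF that] that unfolding D_def by simp
  define \<alpha> where "\<alpha> = (\<lambda>u. Qf x0 u / q0)"
  define \<pi> where "\<pi> = (\<lambda>u. u + (- \<alpha> u) *s x0)"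
  have decomp: "u = \<pi> u + \<alpha> u *s x0" for u
    unfolding \<pi>_def by (simp add: Finite_Cartesian_Product.vec_eq_iff)
  have piperp: "Qf x0 (\<pi> u) = 0" for u
    unfolding \<pi>_def \<alpha>_def q0_def
    by (subst sbil_addR[OF sQ], subst sbil_scR[OF sQ]) (use x0 in simp)
  have cl1: "D y y = 0 \<and> (Qf y y \<noteq> 0 \<longrightarrow> D x0 y = 0)" if yp: "Qf x0 y = 0" for y
  proof -
    define t where "t = csqrt (- Qf y y / q0)"
    have t2: "t^2 = - Qf y y / q0" unfolding t_def by simp
    have q0nz: "q0 \<noteq> 0" using x0 q0_def by simp
    have yx: "Qf y x0 = 0" using yp sbil_sym[OF sQ] by metis
    have nn: "Qf (y + s *s x0) (y + s *s x0) = 0" if "s^2 = t^2" for s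
      using sbil_quad[OF sQ, of y s x0] that t2 yx q0nz unfolding q0_def[symmetric] by simp
    have n1: "Qf (y + t *s x0) (y + t *s x0) = 0" by (rule nn) simp
    have n2: "Qf (y + (-t) *s x0) (y + (-t) *s x0) = 0" by (rule nn) simp
    have e1: "D y y + 2 * t * D y x0 = 0"
      using vanD[OF n1] sbil_quad[OF sD, of y t x0] Dx0 by simp
    have e2: "D y y - 2 * t * D y x0 = 0"
      using vanD[OF n2] sbil_quad[OF sD, of y "-t" x0] Dx0 by simp
    have dyy: "D y y = 0" using e1 e2 by (simp add: algebra_simps) 
    moreover have "Qf y y \<noteq> 0 \<longrightarrow> D x0 y = 0"
    proof
      assume "Qf y y \<noteq> 0"
      then have "t \<noteq> 0" using t2 q0nz by auto
      then show "D x0 y = 0" using e1 dyy sbil_sym[OF sD, of x0 y] by simp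
    qed
    ultimately show ?thesis by blast
  qed
  obtain z where zp: "Qf x0 z = 0" and zq: "Qf z z \<noteq> 0"
  proof (rule ccontr)
    note th = that
    assume nt: "\<not> thesis"
    have allnull: "Qf z z = 0" if "Qf x0 z = 0" for z using th[of z] nt that by blast
    have orth0: "Qf z w = 0" if "Qf x0 z = 0" "Qf x0 w = 0" for z w
    proof -
      have "Qf x0 (z + 1 *s w) = 0" using that by (simp add: sbil_addR[OF sQ] sbil_scR[OF sQ])
      then have "Qf (z + 1 *s w) (z + 1 *s w) = 0" by (rule allnull)
      then show ?thesis using sbil_quad[OF sQ, of z 1 w] allnull[OF that(1)] allnull[OF that(2)]
        by simp
    qed
    obtain i j :: 'n where ij: "i \<noteq> j"
    proof -
      have "\<not> (\<forall>i j::'n. i = j)"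
      proof
        assume "\<forall>i j::'n. i = j"
        then have "UNIV \<subseteq> {undefined::'n}" by auto
        then have "CARD('n) \<le> 1" using card_mono[of "{undefined::'n}"] by fastforce
        then show False using card by simp
      qed
      then show ?thesis using that by blast
    qed
    have "\<exists>w. Qf x0 w = 0 \<and> w \<noteq> 0"
    proof (rule ccontr)
      assume "\<not> ?thesis"
      then have pz: "\<pi> u = 0" for u using piperp by blast
      have ei: "axis i 1 = \<alpha> (axis i 1) *s x0" using decomp[of "axis i 1"] pz by simp
      have ej: "axis j 1 = \<alpha> (axis j 1) *s x0" using decomp[of "axis j 1"] pz by simp
      have "\<alpha> (axis j 1) *s axis i 1 = \<alpha> (axis i 1) *s axis j (1::complex)"
        by (subst ei, subst ej) (simp add: Finite_Cartesian_Product.vec_eq_iff)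
      then have "(\<alpha> (axis j 1) *s axis i 1) $ i = (\<alpha> (axis i 1) *s axis j (1::complex)) $ i"
        by simp
      then have "\<alpha> (axis j 1) = 0" using ij by (simp add: axis_def)
      then have "axis j (1::complex) = 0" using ej by simp
      then show False using axis_nz by blast
    qed
    then obtain w where wp: "Qf x0 w = 0" and wnz: "w \<noteq> 0" by blast
    have "Qf w v = 0" for v
    proof -
      have "Qf w v = Qf w (\<pi> v + \<alpha> v *s x0)" using decomp[of v] by simp
      also have "\<dots> = Qf w (\<pi> v) + \<alpha> v * Qf w x0"
        by (simp add: sbil_addR[OF sQ] sbil_scR[OF sQ])
      also have "\<dots> = 0" using orth0[OF wp piperp[of v]] wp sbil_sym[OF sQ, of w x0] by simp
      finally show ?thesis .
    qed
    then have "w = 0" by (rule nd)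
    then show False using wnz by simp
  qed
  have Dz: "D x0 z = 0" using cl1[OF zp] zq by blast
  have cl2: "D x0 y = 0" if yp: "Qf x0 y = 0" for y
  proof (cases "Qf y y = 0")
    case False then show ?thesis using cl1[OF yp] by blast
  next
    case True
    define s :: complex where "s = (if 2 * Qf y z + Qf z z \<noteq> 0 then 1 else 2)"
    have yz: "Qf x0 (y + s *s z) = 0" using yp zp by (simp add: sbil_addR[OF sQ] sbil_scR[OF sQ])
    have "Qf (y + s *s z) (y + s *s z) = s * (2 * Qf y z + s * Qf z z)"
      using sbil_quad[OF sQ, of y s z] True by (simp add: power2_eq_square algebra_simps)
    moreover have "s * (2 * Qf y z + s * Qf z z) \<noteq> 0"
    proof (cases "2 * Qf y z + Qf z z = 0")
      case True
      then have h: "2 * Qf y z = - Qf z z" by (simp add: eq_neg_iff_add_eq_0)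
      have "s * (2 * Qf y z + s * Qf z z) = 2 * (2 * Qf y z + 2 * Qf z z)"
        using True unfolding s_def by simp
      also have "\<dots> = 2 * Qf z z" by (simp only: h) (simp add: algebra_simps)
      finally show ?thesis using zq by simp
    next
      case False
      then show ?thesis unfolding s_def by simp
    qed
    ultimately have "D x0 (y + s *s z) = 0" using cl1[OF yz] by simp
    then show ?thesis using Dz by (simp add: sbil_addR[OF sD] sbil_scR[OF sD])
  qed
  have "D u u = 0" for u
  proof -
    have "D u u = D (\<pi> u + \<alpha> u *s x0) (\<pi> u + \<alpha> u *s x0)" using decomp[of u] by simp
    also have "\<dots> = D (\<pi> u) (\<pi> u) + 2 * \<alpha> u * D (\<pi> u) x0 + (\<alpha> u)^2 * D x0 x0"
      by (rule sbil_quad[OF sD])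
    also have "\<dots> = 0" using cl1[OF piperp[of u]] cl2[OF piperp[of u]] Dx0
      sbil_sym[OF sD, of "\<pi> u" x0] by simp
    finally show ?thesis .
  qed
  then have "D u v = 0" for u v by (rule sbil_polar[OF sD])
  then show ?thesis unfolding D_def by auto
qed


lemma mult_if10: "(x::'a::semiring_1) * (if P then 1 else 0) = (if P then x else 0)" by simp
lemma if0_mult: "(if P then (x::'a::semiring_1) else 0) * y = (if P then x * y else 0)" by simp
lemma sum_if_const: "(\<Sum>j\<in>S. if P then f j else 0) = (if P then \<Sum>j\<in>S. f j else 0)" by simp
lemmas collapse = mult_if10 if0_mult sum_if_const sum.delta sum.delta'

lemma evalR_ax: "evalR R (axis a 1) x y (axis c 1) = (\<Sum>j\<in>UNIV. \<Sum>k\<in>UNIV. R a j k c * x$j * y$k)"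
  unfolding evalR_def axis_def by (simp add: collapse)
lemma evalRC_ax: "evalRC R (axis a 1) x y (axis c 1) = (\<Sum>j\<in>UNIV. \<Sum>k\<in>UNIV. complex_of_real (R a j k c) * x$j * y$k)"
  unfolding evalRC_def axis_def by (simp add: collapse)
lemma evalR_ax4: "evalR R (axis i 1) (axis j 1) (axis k 1) (axis l 1) = R i j k l"
  unfolding evalR_ax by (simp add: axis_def collapse)

lemma sum4_perm:
  "(\<Sum>a\<in>A. \<Sum>c\<in>C. \<Sum>j\<in>J. \<Sum>k\<in>K. f a c j k) = (\<Sum>j\<in>J. \<Sum>k\<in>K. \<Sum>a\<in>A. \<Sum>c\<in>C. f a c j k)"
proof -
  have "(\<Sum>a\<in>A. \<Sum>c\<in>C. \<Sum>j\<in>J. \<Sum>k\<in>K. f a c j k) = (\<Sum>a\<in>A. \<Sum>j\<in>J. \<Sum>c\<in>C. \<Sum>k\<in>K. f a c j k)"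
    by (rule sum.cong[OF refl], rule sum.swap)
  also have "\<dots> = (\<Sum>a\<in>A. \<Sum>j\<in>J. \<Sum>k\<in>K. \<Sum>c\<in>C. f a c j k)"
    by (rule sum.cong[OF refl], rule sum.cong[OF refl], rule sum.swap)
  also have "\<dots> = (\<Sum>j\<in>J. \<Sum>a\<in>A. \<Sum>k\<in>K. \<Sum>c\<in>C. f a c j k)"
    by (rule sum.swap)
  also have "\<dots> = (\<Sum>j\<in>J. \<Sum>k\<in>K. \<Sum>a\<in>A. \<Sum>c\<in>C. f a c j k)"
    by (rule sum.cong[OF refl], rule sum.swap)
  finally show ?thesis .
qed

lemma Rsym:
  assumes "alg_curv_tensor R"
  shows "R a j i c = R c i j a"
proof -
  have pair: "R i j k l = R k l i j" and anti: "R i j k l = - R j i k l" for i j k l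
    using assms unfolding alg_curv_tensor_def
    by (metis evalR_ax4)+
  have "R a j i c = R i c a j" by (rule pair)
  also have "\<dots> = - R c i a j" by (rule anti)
  also have "R c i a j = R a j c i" by (rule pair)
  also have "R a j c i = - R j a c i" by (rule anti)
  also have "R j a c i = R c i j a" by (rule pair)
  finally show ?thesis by simp
qed

lemma ginv:
  assumes "nondeg_inner g"
  shows "matrix_inv g ** g = Finite_Cartesian_Product.mat 1"
    and "g ** matrix_inv g = Finite_Cartesian_Product.mat 1"
    and "transpose (matrix_inv g) = matrix_inv g"
proof -
  have inv: "invertible g" and sy: "transpose g = g" using assms by (auto simp: nondeg_inner_def)
  have "g ** matrix_inv g = Finite_Cartesian_Product.mat 1 \<and> matrix_inv g ** g = Finite_Cartesian_Product.mat 1"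
    unfolding matrix_inv_def by (rule someI_ex) (use inv in \<open>simp add: invertible_def\<close>)
  then show 1: "matrix_inv g ** g = Finite_Cartesian_Product.mat 1"
    and 2: "g ** matrix_inv g = Finite_Cartesian_Product.mat 1" by auto
  let ?G = "matrix_inv g"
  have "transpose ?G ** g = Finite_Cartesian_Product.mat 1"
    using arg_cong[OF 2, of transpose] sy by (simp add: matrix_transpose_mul transpose_mat)
  note X = this
  have "transpose ?G = transpose ?G ** (g ** ?G)" using 2 by (simp add: matrix_mul_rid)
  also have "\<dots> = (transpose ?G ** g) ** ?G" by (simp add: matrix_mul_assoc)
  also have "\<dots> = ?G" using X by (simp add: matrix_mul_lid)
  finally show "transpose ?G = ?G" by simp
qed

lemma ipC_ax: "ipC M (axis i 1) (axis j 1) = complex_of_real (M $ i $ j)"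
  unfolding ipC_def axis_def by (simp add: collapse)

lemma ipC_nd:
  assumes nd: "nondeg_inner g" and z: "\<And>v. ipC g u v = 0"
  shows "u = 0"
proof -
  let ?G = "matrix_inv g"
  have sy: "g $ i $ j = g $ j $ i" for i j
    using nd unfolding nondeg_inner_def by (metis transpose_def vec_lambda_beta)
  have col: "(\<Sum>i\<in>UNIV. complex_of_real (g $ j $ i) * u $ i) = 0" for j
  proof -
    have "ipC g u (axis j 1) = (\<Sum>i\<in>UNIV. complex_of_real (g $ i $ j) * u $ i)"
      unfolding ipC_def axis_def by (simp add: collapse)
    then show ?thesis using z[of "axis j 1"] sy by simp
  qed
  have d: "(\<Sum>j\<in>UNIV. ?G $ k $ j * g $ j $ i) = (if k = i then 1 else 0)" for k i
    using arg_cong[OF ginv(1)[OF nd], of "\<lambda>M. M $ k $ i"]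
    by (simp add: matrix_matrix_mult_def Finite_Cartesian_Product.mat_def)
  have "u $ k = 0" for k
  proof -
    have "u $ k = (\<Sum>i\<in>UNIV. if k = i then u $ i else 0)" by simp
    also have "\<dots> = (\<Sum>i\<in>UNIV. complex_of_real (if k = i then 1 else 0) * u $ i)"
      by (rule sum.cong) auto
    also have "\<dots> = (\<Sum>i\<in>UNIV. \<Sum>j\<in>UNIV. complex_of_real (?G $ k $ j) * (complex_of_real (g $ j $ i) * u $ i))"
      by (simp add: d[symmetric] sum_distrib_right mult.assoc)
    also have "\<dots> = (\<Sum>j\<in>UNIV. complex_of_real (?G $ k $ j) * (\<Sum>i\<in>UNIV. complex_of_real (g $ j $ i) * u $ i))"
      by (subst sum.swap) (simp add: sum_distrib_left)
    also have "\<dots> = 0" by (simp add: col)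
    finally show ?thesis .
  qed
  then show ?thesis by (simp add: Finite_Cartesian_Product.vec_eq_iff)
qed

lemma sbil_ipC:
  assumes sy: "transpose M = M"
  shows "sbil (ipC M)"
  unfolding sbil_def
proof (intro conjI allI)
  fix u v w :: "complex^'a"
  show "ipC M (u + v) w = ipC M u w + ipC M v w"
    unfolding ipC_def by (simp add: algebra_simps sum.distrib)
next
  fix c :: complex and u w :: "complex^'a"
  show "ipC M (c *s u) w = c * ipC M u w"
    unfolding ipC_def by (simp add: sum_distrib_left mult_ac)
next
  fix u v :: "complex^'a"
  have s: "M $ i $ j = M $ j $ i" for i j
    using sy by (metis transpose_def vec_lambda_beta)
  show "ipC M u v = ipC M v u"
    unfolding ipC_def by (subst sum.swap) (simp add: s mult_ac)
qed

definition ricmat :: "real^'n^'n \<Rightarrow> ('n::finite) tensor4 \<Rightarrow> real^'n^'n" where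
  "ricmat g R = (\<chi> i j. ricci g R (axis i 1) (axis j 1))"

lemma ricmat_entry: "ricmat g R $ i $ j = (\<Sum>a\<in>UNIV. \<Sum>c\<in>UNIV. matrix_inv g $ a $ c * R a i j c)"
  unfolding ricmat_def ricci_def evalR_ax by (simp add: axis_def collapse)

lemma ricmat_sym:
  assumes nd: "nondeg_inner g" and R: "alg_curv_tensor R"
  shows "transpose (ricmat g R) = ricmat g R"
proof -
  let ?G = "matrix_inv g"
  have s: "?G $ i $ j = ?G $ j $ i" for i j
    using ginv(3)[OF nd] by (metis transpose_def vec_lambda_beta)
  have "ricmat g R $ j $ i = ricmat g R $ i $ j" for i j
  proof -
    have "ricmat g R $ j $ i = (\<Sum>a\<in>UNIV. \<Sum>c\<in>UNIV. ?G $ a $ c * R c i j a)"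
      unfolding ricmat_entry by (simp add: Rsym[OF R])
    also have "\<dots> = (\<Sum>c\<in>UNIV. \<Sum>a\<in>UNIV. ?G $ a $ c * R c i j a)" by (rule sum.swap)
    also have "\<dots> = ricmat g R $ i $ j" unfolding ricmat_entry by (simp add: s)
    finally show ?thesis .
  qed
  then show ?thesis by (simp add: transpose_def Finite_Cartesian_Product.vec_eq_iff)
qed

lemma ricci_expand:
  "ricci g R x y = (\<Sum>i\<in>UNIV. \<Sum>j\<in>UNIV. ricmat g R $ i $ j * x $ i * y $ j)"
proof -
  let ?G = "matrix_inv g"
  have "ricci g R x y = (\<Sum>a\<in>UNIV. \<Sum>c\<in>UNIV. \<Sum>i\<in>UNIV. \<Sum>j\<in>UNIV. ?G $ a $ c * R a i j c * x $ i * y $ j)"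
    unfolding ricci_def evalR_ax by (simp add: sum_distrib_left mult_ac)
  also have "\<dots> = (\<Sum>i\<in>UNIV. \<Sum>j\<in>UNIV. \<Sum>a\<in>UNIV. \<Sum>c\<in>UNIV. ?G $ a $ c * R a i j c * x $ i * y $ j)"
    by (rule sum4_perm)
  also have "\<dots> = (\<Sum>i\<in>UNIV. \<Sum>j\<in>UNIV. ricmat g R $ i $ j * x $ i * y $ j)"
    unfolding ricmat_entry by (simp add: sum_distrib_right)
  finally show ?thesis .
qed

lemma trace_jac: "trace (jacobi g R v) = ipC (ricmat g R) v v"
proof -
  let ?G = "matrix_inv g"
  have "trace (jacobi g R v) = (\<Sum>a\<in>UNIV. \<Sum>c\<in>UNIV. \<Sum>i\<in>UNIV. \<Sum>j\<in>UNIV.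
      complex_of_real (?G $ a $ c) * complex_of_real (R a i j c) * v $ i * v $ j)"
    unfolding trace_def jacobi_def evalRC_ax by (simp add: sum_distrib_left mult_ac)
  also have "\<dots> = (\<Sum>i\<in>UNIV. \<Sum>j\<in>UNIV. \<Sum>a\<in>UNIV. \<Sum>c\<in>UNIV.
      complex_of_real (?G $ a $ c) * complex_of_real (R a i j c) * v $ i * v $ j)"
    by (rule sum4_perm)
  also have "\<dots> = ipC (ricmat g R) v v"
    unfolding ipC_def ricmat_entry by (simp add: sum_distrib_right)
  finally show ?thesis .
qed


lemma part3:
  fixes g :: "real^'n::finite^'n" and R :: "'n tensor4"
  assumes card: "CARD('n) \<ge> 3" and nd: "nondeg_inner g" and R: "alg_curv_tensor R"
    and H: "\<forall>x\<in>null_cone g. trace (jacobi g R x) = 0"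
  shows "einstein g R"
proof -
  let ?B = "ricmat g R"
  have "\<exists>c. \<forall>u v. ipC ?B u v = c * ipC g u v"
  proof (rule quad_main)
    show "sbil (ipC g)" using nd by (intro sbil_ipC) (simp add: nondeg_inner_def)
    show "sbil (ipC ?B)" by (intro sbil_ipC ricmat_sym nd R)
    show "u = 0" if "\<And>v. ipC g u v = 0" for u using ipC_nd[OF nd that] .
    show "CARD('n) \<ge> 2" using card by simp
    show "ipC ?B v v = 0" if "ipC g v v = 0" for v
      using H that by (simp add: null_cone_def trace_jac)
  qed
  then obtain c where c: "\<And>u v. ipC ?B u v = c * ipC g u v" by blast
  have ce: "complex_of_real (?B $ i $ j) = c * complex_of_real (g $ i $ j)" for i j
    using c[of "axis i 1" "axis j 1"] by (simp add: ipC_ax)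
  obtain i0 j0 where g0: "g $ i0 $ j0 \<noteq> 0"
  proof (rule ccontr)
    assume "\<not> thesis"
    then have "g = 0" using that by (simp add: Finite_Cartesian_Product.vec_eq_iff) blast
    then have "g ** matrix_inv g = 0" by (simp add: matrix_matrix_mult_def Finite_Cartesian_Product.vec_eq_iff)
    then have "(Finite_Cartesian_Product.mat 1 :: real^'n^'n) $ undefined $ undefined = 0"
      using ginv(2)[OF nd] by simp
    then show False by (simp add: Finite_Cartesian_Product.mat_def)
  qed
  define c1 where "c1 = ?B $ i0 $ j0 / g $ i0 $ j0"
  have "c = complex_of_real c1"
    using ce[of i0 j0] g0 unfolding c1_def by (simp add: field_simps)
  then have be: "?B $ i $ j = c1 * g $ i $ j" for i j
    using ce[of i j] by (metis of_real_eq_iff of_real_mult)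
  show ?thesis unfolding einstein_def
  proof (intro exI allI)
    fix x y
    show "ricci g R x y = c1 * ipR g x y"
      unfolding ricci_expand ipR_def by (simp add: be sum_distrib_left mult_ac)
  qed
qed

lemma k_stein_mono: "k \<le> m \<Longrightarrow> k_stein g R m \<Longrightarrow> k_stein g R k"
  unfolding k_stein_def by fastforce

theorem lemma2p1:
  fixes g :: "real^'n^'n" and R :: "'n tensor4"
  assumes "CARD('n) \<ge> 3"
    and "nondeg_inner g"
    and "alg_curv_tensor R"
  shows "(\<forall>k::nat. k \<ge> 1 \<longrightarrow> k_stein g R k \<longrightarrow>
            (\<forall>x\<in>null_cone g. trace (matpow (jacobi g R x) k) = 0))
       \<and> (k_stein g R CARD('n) \<longrightarrow>
            (\<forall>x\<in>null_cone g. nilpotent_mat (jacobi g R x)))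
       \<and> ((\<forall>x\<in>null_cone g. trace (jacobi g R x) = 0) \<longrightarrow> einstein g R)"
proof (intro conjI allI impI ballI)
  fix k :: nat and x assume "k \<ge> 1" "k_stein g R k" "x \<in> null_cone g"
  then show "trace (matpow (jacobi g R x) k) = 0" by (rule part1)
next
  fix x assume ks: "k_stein g R CARD('n)" and x: "x \<in> null_cone g"
  show "nilpotent_mat (jacobi g R x)"
  proof (rule vec_nilp)
    fix k assume "k \<in> {1..CARD('n)}"
    then show "trace (matpow (jacobi g R x) k) = 0"
      using part1[OF _ k_stein_mono[OF _ ks] x] by auto
  qed
next
  assume "\<forall>x\<in>null_cone g. trace (jacobi g R x) = 0"
  then show "einstein g R" using part3 assms by blast
qed


end
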